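(* Fix a finite relational schema $\sigma$ and an integer $d\geq 2$. Let $\epsilon\in(0,1]$, $r\in\mathbb{N}$, and let $\mathcal{D}$ be a $\sigma$-database belonging to a class $\mathbf{C}$ of $\sigma$-databases of degree at most $d$ such that $\operatorname{h}_r(\mathbf{C})$ is semilinear, written as $\operatorname{h}_r(\mathbf{C})=M_1\cup\dots\cup M_m$ with $m\in\mathbb{N}$ and, for each $i\in[m]$, $M_i=\{\bar v_0^i+a_1\bar v_1^i+\dots+a_{k_i}\bar v_{k_i}^i\mid a_1,\dots,a_{k_i}\in\mathbb{N}\}$ where $\bar v_0^i,\dots,\bar v_{k_i}^i\in\mathbb{N}^{\operatorname{c}(r)}$. Let $c:=\operatorname{c}(r)$, $k:=\max_{i\in[m]}k_i+1$ and $v:=\max_{i\in[m]}\max_{0\leq j\leq k_i}\|\bar v_j^i\|_1$. Then there exists a $\sigma$-database $\mathcal{D}_0$ such that $\|\operatorname{dv}_r(\mathcal{D})-\operatorname{dv}_r(\mathcal{D}_0)\|_1\leq\epsilon$ and $|D_0|\leq kv\left(\frac{3ckv}{\epsilon}+2\right)$.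
   Context: A schema $\sigma$ is a finite set of relation names with arities in $\mathbb{N}_{\geq 1}$. A $\sigma$-database $\mathcal{D}$ has a finite domain $D$ and a relation $R^{\mathcal{D}}\subseteq D^{\operatorname{ar}(R)}$ for each $R\in\sigma$. The Gaifman graph has vertex set $D$ and an edge between distinct $a,b$ whenever some tuple contains both. The degree of an element is the number of tuples containing it; the degree of $\mathcal{D}$ is the maximum. $N_r(a)$ is the set of elements at Gaifman distance at most $r$ from $a$; the $r$-neighbourhood of $a$ is $(\mathcal{D}[N_r(a)],a)$ (induced sub-database with centre $a$); an $r$-type is a centre-preserving isomorphism class of $r$-neighbourhoods; $\operatorname{c}(r)$ is the number of $r$-types of degree at most $d$ over $\sigma$. $\operatorname{h}_r(\mathcal{D})\in\mathbb{N}^{\operatorname{c}(r)}$ counts the elements of each $r$-type; $\operatorname{dv}_r(\mathcal{D})=\operatorname{h}_r(\mathcal{D})/|D|$; $\operatorname{h}_r(\mathbf{C})=\{\operatorname{h}_r(\mathcal{D})\mid\mathcal{D}\in\mathbf{C}\}$. A set is semilinear if it is a finite union of linear sets $\{\bar v_0+\sum a_j\bar v_j\mid a_j\in\mathbb{N}\}$. *)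

theory Defs
  imports Complex_Main
begin

text \<open>Relation names have type 'r; a schema is a finite set
  sigma of relation names together with an arity function ar. Database elements are
  natural numbers (every finite database is isomorphic to one of this form).\<close>

record 'r db =
  dbdom :: "nat set"
  dbrel :: "'r \<Rightarrow> nat list set"

definition wf_db :: "'r set \<Rightarrow> ('r \<Rightarrow> nat) \<Rightarrow> 'r db \<Rightarrow> bool" where
  "wf_db \<sigma> ar D \<longleftrightarrow> finite (dbdom D) \<and>
     (\<forall>R. R \<notin> \<sigma> \<longrightarrow> dbrel D R = {}) \<and>
     (\<forall>R\<in>\<sigma>. \<forall>t\<in>dbrel D R. length t = ar R \<and> set t \<subseteq> dbdom D)"

definition elem_degree :: "'r set \<Rightarrow> 'r db \<Rightarrow> nat \<Rightarrow> nat" where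
  "elem_degree \<sigma> D a = card {(R, t). R \<in> \<sigma> \<and> t \<in> dbrel D R \<and> a \<in> set t}"

definition db_degree :: "'r set \<Rightarrow> 'r db \<Rightarrow> nat" where
  "db_degree \<sigma> D = Max (insert 0 (elem_degree \<sigma> D ` dbdom D))"

definition gaifman :: "'r set \<Rightarrow> 'r db \<Rightarrow> (nat \<times> nat) set" where
  "gaifman \<sigma> D = {(a, b). a \<noteq> b \<and> (\<exists>R\<in>\<sigma>. \<exists>t\<in>dbrel D R. a \<in> set t \<and> b \<in> set t)}"

definition ball_r :: "'r set \<Rightarrow> nat \<Rightarrow> 'r db \<Rightarrow> nat \<Rightarrow> nat set" where
  "ball_r \<sigma> r D a = {b \<in> dbdom D. \<exists>n\<le>r. (a, b) \<in> (gaifman \<sigma> D) ^^ n}"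

definition induced :: "'r db \<Rightarrow> nat set \<Rightarrow> 'r db" where
  "induced D S = \<lparr>dbdom = S, dbrel = (\<lambda>R. {t \<in> dbrel D R. set t \<subseteq> S})\<rparr>"

definition nbhd :: "'r set \<Rightarrow> nat \<Rightarrow> 'r db \<Rightarrow> nat \<Rightarrow> 'r db \<times> nat" where
  "nbhd \<sigma> r D a = (induced D (ball_r \<sigma> r D a), a)"

definition piso :: "'r db \<times> nat \<Rightarrow> 'r db \<times> nat \<Rightarrow> bool" where
  "piso P Q \<longleftrightarrow> (\<exists>f. bij_betw f (dbdom (fst P)) (dbdom (fst Q)) \<and> f (snd P) = snd Q \<and>
     (\<forall>R. map f ` dbrel (fst P) R = dbrel (fst Q) R))"

definition rtype :: "'r set \<Rightarrow> ('r \<Rightarrow> nat) \<Rightarrow> nat \<Rightarrow> 'r db \<Rightarrow> nat \<Rightarrow> ('r db \<times> nat) set" where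
  "rtype \<sigma> ar r D a = {P. wf_db \<sigma> ar (fst P) \<and> snd P \<in> dbdom (fst P) \<and> piso P (nbhd \<sigma> r D a)}"

definition rtypes :: "'r set \<Rightarrow> ('r \<Rightarrow> nat) \<Rightarrow> nat \<Rightarrow> nat \<Rightarrow> ('r db \<times> nat) set set" where
  "rtypes \<sigma> ar d r = {rtype \<sigma> ar r D a | D a. wf_db \<sigma> ar D \<and> a \<in> dbdom D \<and>
       db_degree \<sigma> (fst (nbhd \<sigma> r D a)) \<le> d}"

definition ctypes :: "'r set \<Rightarrow> ('r \<Rightarrow> nat) \<Rightarrow> nat \<Rightarrow> nat \<Rightarrow> nat" where
  "ctypes \<sigma> ar d r = card (rtypes \<sigma> ar d r)"

definition hvec :: "'r set \<Rightarrow> ('r \<Rightarrow> nat) \<Rightarrow> nat \<Rightarrow> 'r db \<Rightarrow> ('r db \<times> nat) set \<Rightarrow> nat" where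
  "hvec \<sigma> ar r D \<tau> = card {a \<in> dbdom D. rtype \<sigma> ar r D a = \<tau>}"

definition dvec :: "'r set \<Rightarrow> ('r \<Rightarrow> nat) \<Rightarrow> nat \<Rightarrow> 'r db \<Rightarrow> ('r db \<times> nat) set \<Rightarrow> real" where
  "dvec \<sigma> ar r D \<tau> = real (hvec \<sigma> ar r D \<tau>) / real (card (dbdom D))"

end

theory Submission imports Defs begin

lemma norm_lemma:
  fixes x y :: "'a \<Rightarrow> real"
  assumes T: "finite T" and x0: "\<forall>\<tau>\<in>T. 0 \<le> x \<tau>" and y0: "\<forall>\<tau>\<in>T. 0 \<le> y \<tau>"
    and X: "0 < sum x T"
  shows "(\<Sum>\<tau>\<in>T. \<bar>x \<tau> / sum x T - y \<tau> / sum y T\<bar>) \<le> 2 * (\<Sum>\<tau>\<in>T. \<bar>x \<tau> - y \<tau>\<bar>) / sum x T"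
proof (cases "sum y T = 0")
  case True
  then have yz: "\<forall>\<tau>\<in>T. y \<tau> = 0" using sum_nonneg_eq_0_iff[OF T] y0 by blast
  have "(\<Sum>\<tau>\<in>T. \<bar>x \<tau> / sum x T - y \<tau> / sum y T\<bar>) = (\<Sum>\<tau>\<in>T. x \<tau> / sum x T)"
    using yz x0 X by (intro sum.cong) auto
  also have "\<dots> = 1" using X by (simp add: sum_divide_distrib[symmetric])
  also have "(\<Sum>\<tau>\<in>T. \<bar>x \<tau> - y \<tau>\<bar>) = sum x T" using yz x0 by (intro sum.cong) auto
  ultimately show ?thesis using X by simp
next
  case False
  define X where "X = sum x T"
  define Y where "Y = sum y T"
  have Yp: "Y > 0" using False y0 sum_nonneg[of T y] unfolding Y_def by force
  have Xp: "X > 0" using X X_def by simp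
  have pw: "\<bar>x \<tau> / X - y \<tau> / Y\<bar> \<le> \<bar>x \<tau> - y \<tau>\<bar> / X + y \<tau> * \<bar>Y - X\<bar> / (X * Y)" if "\<tau> \<in> T" for \<tau>
  proof -
    have "x \<tau> / X - y \<tau> / Y = (x \<tau> - y \<tau>) / X + y \<tau> * (Y - X) / (X * Y)"
      using Xp Yp by (simp add: field_simps)
    also have "\<bar>\<dots>\<bar> \<le> \<bar>(x \<tau> - y \<tau>) / X\<bar> + \<bar>y \<tau> * (Y - X) / (X * Y)\<bar>" by (rule abs_triangle_ineq)
    also have "\<dots> = \<bar>x \<tau> - y \<tau>\<bar> / X + y \<tau> * \<bar>Y - X\<bar> / (X * Y)"
      using Xp Yp y0 that by (simp add: abs_mult abs_divide)
    finally show ?thesis .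
  qed
  have "(\<Sum>\<tau>\<in>T. \<bar>x \<tau> / X - y \<tau> / Y\<bar>) \<le> (\<Sum>\<tau>\<in>T. \<bar>x \<tau> - y \<tau>\<bar> / X + y \<tau> * \<bar>Y - X\<bar> / (X * Y))"
    using pw by (rule sum_mono)
  also have "\<dots> = (\<Sum>\<tau>\<in>T. \<bar>x \<tau> - y \<tau>\<bar>) / X + Y * \<bar>Y - X\<bar> / (X * Y)"
    by (simp add: sum.distrib sum_divide_distrib[symmetric] sum_distrib_right[symmetric] Y_def)
  also have "\<dots> = (\<Sum>\<tau>\<in>T. \<bar>x \<tau> - y \<tau>\<bar>) / X + \<bar>Y - X\<bar> / X" using Yp by simp
  also have "\<bar>Y - X\<bar> \<le> (\<Sum>\<tau>\<in>T. \<bar>x \<tau> - y \<tau>\<bar>)"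
  proof -
    have "\<bar>Y - X\<bar> = \<bar>\<Sum>\<tau>\<in>T. y \<tau> - x \<tau>\<bar>" by (simp add: X_def Y_def sum_subtractf)
    also have "\<dots> \<le> (\<Sum>\<tau>\<in>T. \<bar>y \<tau> - x \<tau>\<bar>)" by (rule sum_abs)
    finally show ?thesis by (simp add: abs_minus_commute)
  qed
  then have "(\<Sum>\<tau>\<in>T. \<bar>x \<tau> - y \<tau>\<bar>) / X + \<bar>Y - X\<bar> / X \<le> 2 * (\<Sum>\<tau>\<in>T. \<bar>x \<tau> - y \<tau>\<bar>) / X"
    using Xp by (simp add: divide_right_mono add_divide_distrib[symmetric])
  finally show ?thesis unfolding X_def Y_def .
qed

lemma finite_rel:
  assumes "wf_db \<sigma> ar E" "R \<in> \<sigma>"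
  shows "finite (dbrel E R)"
proof -
  have "dbrel E R \<subseteq> {t. set t \<subseteq> dbdom E \<and> length t = ar R}" using assms unfolding wf_db_def by auto
  moreover have "finite {t. set t \<subseteq> dbdom E \<and> length t = ar R}"
    using assms finite_lists_length_eq unfolding wf_db_def by blast
  ultimately show ?thesis by (rule finite_subset)
qed

lemma nbhd_degree:
  assumes fs: "finite \<sigma>" and wf: "wf_db \<sigma> ar E" and a: "a \<in> dbdom E"
  shows "db_degree \<sigma> (fst (nbhd \<sigma> r E a)) \<le> db_degree \<sigma> E"
proof -
  define S where "S = ball_r \<sigma> r E a"
  have SE: "S \<subseteq> dbdom E" unfolding S_def ball_r_def by auto
  have finE: "finite (dbdom E)" using wf unfolding wf_db_def by auto
  have "elem_degree \<sigma> (induced E S) b \<le> db_degree \<sigma> E" if b: "b \<in> S" for b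
  proof -
    have fin: "finite {(R, t). R \<in> \<sigma> \<and> t \<in> dbrel E R \<and> b \<in> set t}"
      by (rule finite_subset[of _ "Sigma \<sigma> (dbrel E)"]) (auto intro!: finite_SigmaI fs finite_rel[OF wf])
    have "elem_degree \<sigma> (induced E S) b \<le> elem_degree \<sigma> E b"
      unfolding elem_degree_def induced_def by (rule card_mono[OF fin]) auto
    also have "\<dots> \<le> db_degree \<sigma> E" unfolding db_degree_def
      using b SE finE by (intro Max_ge) auto
    finally show ?thesis .
  qed
  moreover have "finite S" using SE finE by (rule finite_subset)
  ultimately have "Max (insert 0 (elem_degree \<sigma> (induced E S) ` S)) \<le> db_degree \<sigma> E"
    by (subst Max_le_iff) auto
  moreover have "fst (nbhd \<sigma> r E a) = induced E S" unfolding nbhd_def S_def by simp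
  moreover have "db_degree \<sigma> (induced E S) = Max (insert 0 (elem_degree \<sigma> (induced E S) ` S))"
    unfolding db_degree_def by (simp add: induced_def)
  ultimately show ?thesis by simp
qed

lemma card_sum:
  assumes fs: "finite \<sigma>" and wf: "wf_db \<sigma> ar E" and deg: "db_degree \<sigma> E \<le> d"
    and T: "finite (rtypes \<sigma> ar d r)"
  shows "card (dbdom E) = (\<Sum>\<tau>\<in>rtypes \<sigma> ar d r. hvec \<sigma> ar r E \<tau>)"
proof -
  have finE: "finite (dbdom E)" using wf unfolding wf_db_def by auto
  have mem: "rtype \<sigma> ar r E a \<in> rtypes \<sigma> ar d r" if "a \<in> dbdom E" for a
    unfolding rtypes_def using that wf nbhd_degree[OF fs wf that, of r] deg by fastforce
  have "dbdom E = (\<Union>\<tau>\<in>rtypes \<sigma> ar d r. {a \<in> dbdom E. rtype \<sigma> ar r E a = \<tau>})"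
    using mem by auto
  then have "card (dbdom E) = card (\<Union>\<tau>\<in>rtypes \<sigma> ar d r. {a \<in> dbdom E. rtype \<sigma> ar r E a = \<tau>})"
    by simp
  also have "\<dots> = (\<Sum>\<tau>\<in>rtypes \<sigma> ar d r. card {a \<in> dbdom E. rtype \<sigma> ar r E a = \<tau>})"
    by (rule card_UN_disjoint) (use T finE in auto)
  finally show ?thesis unfolding hvec_def .
qed

theorem corollary10:
  fixes \<sigma> :: "'r set" and ar :: "'r \<Rightarrow> nat" and d r m :: nat and \<epsilon> :: real
    and C :: "'r db set" and D :: "'r db"
    and ks :: "nat \<Rightarrow> nat"
    and vs :: "nat \<Rightarrow> nat \<Rightarrow> ('r db \<times> nat) set \<Rightarrow> nat"
  assumes schema: "finite \<sigma>" "\<forall>R\<in>\<sigma>. ar R \<ge> 1"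
    and d2: "d \<ge> 2"
    and eps: "0 < \<epsilon>" "\<epsilon> \<le> 1"
    and classC: "\<forall>E\<in>C. wf_db \<sigma> ar E \<and> db_degree \<sigma> E \<le> d"
    and DC: "D \<in> C"
    and vecs: "\<forall>i\<in>{1..m}. \<forall>j\<le>ks i. \<forall>\<tau>. \<tau> \<notin> rtypes \<sigma> ar d r \<longrightarrow> vs i j \<tau> = 0"
    and semilin: "hvec \<sigma> ar r ` C =
       (\<Union>i\<in>{1..m}. {(\<lambda>\<tau>. vs i 0 \<tau> + (\<Sum>j\<in>{1..ks i}. a j * vs i j \<tau>)) | a :: nat \<Rightarrow> nat. True})"
  shows "let c = ctypes \<sigma> ar d r;
             k = Max (ks ` {1..m}) + 1;
             v = Max {(\<Sum>\<tau>\<in>rtypes \<sigma> ar d r. vs i j \<tau>) | i j. i \<in> {1..m} \<and> j \<le> ks i}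
         in \<exists>D0. wf_db \<sigma> ar D0 \<and> db_degree \<sigma> D0 \<le> d \<and>
              (\<Sum>\<tau>\<in>rtypes \<sigma> ar d r. \<bar>dvec \<sigma> ar r D \<tau> - dvec \<sigma> ar r D0 \<tau>\<bar>) \<le> \<epsilon> \<and>
              real (card (dbdom D0)) \<le> real (k * v) * (3 * real c * real k * real v / \<epsilon> + 2)"
proof -
  define T where "T = rtypes \<sigma> ar d r"
  from DC semilin obtain i where i: "i \<in> {1..m}"
    and "hvec \<sigma> ar r D \<in> {(\<lambda>\<tau>. vs i 0 \<tau> + (\<Sum>j\<in>{1..ks i}. a j * vs i j \<tau>)) | a :: nat \<Rightarrow> nat. True}"
    by blast
  then obtain a where ha: "hvec \<sigma> ar r D = (\<lambda>\<tau>. vs i 0 \<tau> + (\<Sum>j\<in>{1..ks i}. a j * vs i j \<tau>))"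
    by blast
  define V where "V = {(\<Sum>\<tau>\<in>T. vs i j \<tau>) | i j. i \<in> {1..m} \<and> j \<le> ks i}"
  have finV: "finite V"
  proof -
    have "V \<subseteq> (\<lambda>(i,j). \<Sum>\<tau>\<in>T. vs i j \<tau>) ` ({1..m} \<times> {..Max (ks ` {1..m})})"
    proof
      fix x assume "x \<in> V"
      then obtain i' j where x: "x = (\<Sum>\<tau>\<in>T. vs i' j \<tau>)" "i' \<in> {1..m}" "j \<le> ks i'"
        unfolding V_def by blast
      have "ks i' \<le> Max (ks ` {1..m})" using x(2) by (intro Max_ge) auto
      then have "(i', j) \<in> {1..m} \<times> {..Max (ks ` {1..m})}" using x(2) le_trans[OF x(3) \<open>ks i' \<le> Max (ks ` {1..m})\<close>] by blast
      then show "x \<in> (\<lambda>(i,j). \<Sum>\<tau>\<in>T. vs i j \<tau>) ` ({1..m} \<times> {..Max (ks ` {1..m})})"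
        using x(1) by force
    qed
    then show ?thesis by (rule finite_subset) auto
  qed
  have uv: "(\<Sum>\<tau>\<in>T. vs i j \<tau>) \<le> Max V" if "j \<le> ks i" for j
    using finV i that unfolding V_def by (intro Max_ge) auto
  have Kk: "ks i + 1 \<le> Max (ks ` {1..m}) + 1" using i by (intro add_right_mono Max_ge) auto
  define c where "c = card T"
  define k where "k = Max (ks ` {1..m}) + 1"
  define v where "v = Max V"
  have main: "\<exists>D0. wf_db \<sigma> ar D0 \<and> db_degree \<sigma> D0 \<le> d \<and>
              (\<Sum>\<tau>\<in>T. \<bar>dvec \<sigma> ar r D \<tau> - dvec \<sigma> ar r D0 \<tau>\<bar>) \<le> \<epsilon> \<and>
              real (card (dbdom D0)) \<le> real (k * v) * (3 * real c * real k * real v / \<epsilon> + 2)"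
  proof (cases "finite T")
    case False
    have "V = {0}" unfolding V_def using False i by auto
    then have "v = 0" unfolding v_def by simp
    moreover have "wf_db \<sigma> ar \<lparr>dbdom = {}, dbrel = \<lambda>R. {}\<rparr>" unfolding wf_db_def by simp
    moreover have "db_degree \<sigma> \<lparr>dbdom = {}, dbrel = \<lambda>R. {}\<rparr> \<le> d" unfolding db_degree_def by simp
    ultimately show ?thesis using False eps
      by (intro exI[of _ "\<lparr>dbdom = {}, dbrel = \<lambda>R. {}\<rparr>"]) auto
  next
    case True
    have hc: "card (dbdom E) = (\<Sum>\<tau>\<in>T. hvec \<sigma> ar r E \<tau>)" if "E \<in> C" for E
      using card_sum[OF schema(1), of ar E d r] classC that True unfolding T_def by blast
    define K where "K = ks i"
    define n where "n = card (dbdom D)"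
    define N where "N j = (\<Sum>\<tau>\<in>T. vs i j \<tau>)" for j
    have lin: "(\<Sum>\<tau>\<in>T. vs i 0 \<tau> + (\<Sum>j\<in>{1..K}. \<alpha> j * vs i j \<tau>)) = N 0 + (\<Sum>j\<in>{1..K}. \<alpha> j * N j)"
      for \<alpha> :: "nat \<Rightarrow> nat"
    proof -
      have "(\<Sum>\<tau>\<in>T. vs i 0 \<tau> + (\<Sum>j\<in>{1..K}. \<alpha> j * vs i j \<tau>))
          = N 0 + (\<Sum>\<tau>\<in>T. \<Sum>j\<in>{1..K}. \<alpha> j * vs i j \<tau>)" by (simp add: sum.distrib N_def)
      also have "(\<Sum>\<tau>\<in>T. \<Sum>j\<in>{1..K}. \<alpha> j * vs i j \<tau>) = (\<Sum>j\<in>{1..K}. \<Sum>\<tau>\<in>T. \<alpha> j * vs i j \<tau>)"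
        by (rule sum.swap)
      also have "\<dots> = (\<Sum>j\<in>{1..K}. \<alpha> j * N j)" by (simp add: N_def sum_distrib_left)
      finally show ?thesis .
    qed
    have n_eq: "n = N 0 + (\<Sum>j\<in>{1..K}. a j * N j)"
      unfolding n_def hc[OF DC] ha K_def[symmetric] by (rule lin)
    have Nv: "N j \<le> v" if "j \<le> K" for j using uv that unfolding N_def v_def K_def by blast
    define B where "B = real (k * v) * (3 * real c * real k * real v / \<epsilon> + 2)"
    have B0: "B \<ge> 0" unfolding B_def using eps by simp
    show ?thesis
    proof (cases "real n \<le> B")
      case True
      then show ?thesis using classC DC eps unfolding B_def n_def by (intro exI[of _ D]) auto
    next
      case False
      have n0: "n > 0" using False B0 by linarith
      have v1: "v \<ge> 1"
      proof (rule ccontr)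
        assume "\<not> v \<ge> 1"
        then have "\<forall>j\<le>K. N j = 0" using Nv by fastforce
        then have "n = 0" unfolding n_eq by simp
        then show False using n0 by simp
      qed
      have c1: "c \<ge> 1"
      proof (rule ccontr)
        assume "\<not> c \<ge> 1"
        then have "T = {}" using \<open>finite T\<close> unfolding c_def using card_gt_0_iff[of T] by linarith
        then show False using n0 hc[OF DC] unfolding n_def by simp
      qed
      have Kk': "K + 1 \<le> k" using Kk unfolding K_def k_def .
      have k1: "k \<ge> 1" using Kk' by simp
      have ckv: "real c * real k * real v \<ge> 1"
      proof -
        have "c * k * v \<ge> 1" using c1 k1 v1 by simp
        then show ?thesis by (metis of_nat_1 of_nat_le_iff of_nat_mult)
      qed
      have Bsplit: "B = real (k * v) * (3 * real c * real k * real v / \<epsilon>) + 2 * real (k * v)"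
        unfolding B_def by (simp add: algebra_simps)
      have big: "real (k * v) * (3 * real c * real k * real v / \<epsilon>) \<ge> 2 * real k * real v / \<epsilon>"
      proof -
        have "3 * real c * real k * real v / \<epsilon> \<ge> 3 / \<epsilon>"
          using ckv eps by (intro divide_right_mono) auto
        then have "real (k * v) * (3 * real c * real k * real v / \<epsilon>) \<ge> real (k * v) * (3 / \<epsilon>)"
          by (intro mult_left_mono) auto
        moreover have "real (k * v) * (3 / \<epsilon>) \<ge> 2 * real k * real v / \<epsilon>"
          using eps by (simp add: field_simps)
        ultimately show ?thesis by linarith
      qed
      define t where "t = 2 * real k * real v / (\<epsilon> * real n)"
      have tpos: "t > 0" unfolding t_def using eps n0 k1 v1 by simp
      have tn: "t * real n = 2 * real k * real v / \<epsilon>" unfolding t_def using n0 eps by simp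
      have t1: "t \<le> 1"
      proof -
        have "t * real n \<le> real n" using tn big Bsplit False of_nat_0_le_iff[of "k*v"] by linarith
        then show ?thesis using n0 by simp
      qed
      define b where "b j = nat \<lfloor>real (a j) * t\<rfloor>" for j
      have bfl: "real (b j) = of_int \<lfloor>real (a j) * t\<rfloor>" for j
        unfolding b_def using tpos by (intro of_nat_nat) simp
      have b_le: "real (b j) \<le> real (a j) * t" for j unfolding bfl by simp
      have b_ge: "real (b j) \<ge> real (a j) * t - 1" for j unfolding bfl by linarith
      define h0 where "h0 = (\<lambda>\<tau>. vs i 0 \<tau> + (\<Sum>j\<in>{1..ks i}. b j * vs i j \<tau>))"
      have "h0 \<in> hvec \<sigma> ar r ` C" unfolding semilin h0_def using i by blast
      then obtain D0 where D0C: "D0 \<in> C" and hD0: "hvec \<sigma> ar r D0 = h0" by blast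
      define n0 where "n0 = card (dbdom D0)"
      have n0_eq: "n0 = N 0 + (\<Sum>j\<in>{1..K}. b j * N j)"
        unfolding n0_def hc[OF D0C] hD0 h0_def K_def[symmetric] by (rule lin)
      have n0_le: "real n0 \<le> real v + t * real n"
      proof -
        have "real n0 = real (N 0) + (\<Sum>j\<in>{1..K}. real (b j) * real (N j))"
          unfolding n0_eq by simp
        also have "\<dots> \<le> real (N 0) + (\<Sum>j\<in>{1..K}. (real (a j) * t) * real (N j))"
          using b_le by (intro add_left_mono sum_mono mult_right_mono) auto
        also have "\<dots> = real (N 0) + t * (\<Sum>j\<in>{1..K}. real (a j) * real (N j))"
          by (simp add: sum_distrib_left algebra_simps)
        also have "\<dots> \<le> real v + t * real n"
        proof -
          have "real (N 0) \<le> real v" using Nv by simp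
          moreover have "(\<Sum>j\<in>{1..K}. real (a j) * real (N j)) \<le> real n"
            unfolding n_eq by simp
          then have "t * (\<Sum>j\<in>{1..K}. real (a j) * real (N j)) \<le> t * real n"
            using tpos by (intro mult_left_mono) auto
          ultimately show ?thesis by linarith
        qed
        finally show ?thesis .
      qed
      have size: "real (card (dbdom D0)) \<le> B"
      proof -
        have "v \<le> 2 * (k * v)" using k1 by simp
        then have "real v \<le> 2 * real (k * v)" by (metis of_nat_le_iff of_nat_mult of_nat_numeral)
        then show ?thesis using n0_le tn big Bsplit unfolding n0_def by linarith
      qed
      define x where "x \<tau> = real (hvec \<sigma> ar r D \<tau>)" for \<tau>
      define y where "y \<tau> = real (h0 \<tau>) / t" for \<tau>
      have sx: "sum x T = real n" unfolding x_def n_def hc[OF DC] by simp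
      have sy: "sum y T = real n0 / t"
        unfolding y_def n0_def hc[OF D0C] hD0 by (simp add: sum_divide_distrib)
      have dvD: "dvec \<sigma> ar r D \<tau> = x \<tau> / sum x T" for \<tau> unfolding dvec_def sx x_def n_def ..
      have dvD0: "dvec \<sigma> ar r D0 \<tau> = y \<tau> / sum y T" for \<tau>
        unfolding dvec_def sy y_def hD0 n0_def using tpos by simp
      have pw: "\<bar>x \<tau> - y \<tau>\<bar> \<le> (real (vs i 0 \<tau>) + (\<Sum>j\<in>{1..K}. real (vs i j \<tau>))) / t" for \<tau>
      proof -
        have "x \<tau> - y \<tau> = (real (vs i 0 \<tau>) - real (vs i 0 \<tau>) / t)
             + (\<Sum>j\<in>{1..K}. (real (a j) - real (b j) / t) * real (vs i j \<tau>))"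
          unfolding x_def y_def ha h0_def K_def
          by (simp add: add_divide_distrib sum_divide_distrib sum_subtractf left_diff_distrib)
        also have "\<bar>\<dots>\<bar> \<le> \<bar>real (vs i 0 \<tau>) - real (vs i 0 \<tau>) / t\<bar>
             + \<bar>\<Sum>j\<in>{1..K}. (real (a j) - real (b j) / t) * real (vs i j \<tau>)\<bar>"
          by (rule abs_triangle_ineq)
        also have "\<dots> \<le> real (vs i 0 \<tau>) / t + (\<Sum>j\<in>{1..K}. real (vs i j \<tau>) / t)"
        proof (rule add_mono)
          have "real (vs i 0 \<tau>) \<le> real (vs i 0 \<tau>) / t"
            using tpos t1 by (simp add: le_divide_eq mult_left_le)
          then show "\<bar>real (vs i 0 \<tau>) - real (vs i 0 \<tau>) / t\<bar> \<le> real (vs i 0 \<tau>) / t" by simp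
          have "\<bar>\<Sum>j\<in>{1..K}. (real (a j) - real (b j) / t) * real (vs i j \<tau>)\<bar>
              \<le> (\<Sum>j\<in>{1..K}. \<bar>(real (a j) - real (b j) / t) * real (vs i j \<tau>)\<bar>)" by (rule sum_abs)
          also have "\<dots> \<le> (\<Sum>j\<in>{1..K}. real (vs i j \<tau>) / t)"
          proof (rule sum_mono)
            fix j
            have u: "real (b j) / t \<le> real (a j)" using b_le tpos by (simp add: divide_le_eq)
            have l: "real (a j) - 1 / t \<le> real (b j) / t" using b_ge tpos
              by (simp add: le_divide_eq algebra_simps)
            have "\<bar>real (a j) - real (b j) / t\<bar> \<le> 1 / t" using u l by linarith
            then have "\<bar>real (a j) - real (b j) / t\<bar> * real (vs i j \<tau>) \<le> 1 / t * real (vs i j \<tau>)"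
              by (intro mult_right_mono) auto
            then show "\<bar>(real (a j) - real (b j) / t) * real (vs i j \<tau>)\<bar> \<le> real (vs i j \<tau>) / t"
              by (simp add: abs_mult)
          qed
          finally show "\<bar>\<Sum>j\<in>{1..K}. (real (a j) - real (b j) / t) * real (vs i j \<tau>)\<bar>
              \<le> (\<Sum>j\<in>{1..K}. real (vs i j \<tau>) / t)" .
        qed
        also have "\<dots> = (real (vs i 0 \<tau>) + (\<Sum>j\<in>{1..K}. real (vs i j \<tau>))) / t"
          by (simp add: add_divide_distrib sum_divide_distrib)
        finally show ?thesis .
      qed
      have sumdiff: "(\<Sum>\<tau>\<in>T. \<bar>x \<tau> - y \<tau>\<bar>) \<le> real k * real v / t"
      proof -
        have "(\<Sum>\<tau>\<in>T. \<bar>x \<tau> - y \<tau>\<bar>) \<le> (\<Sum>\<tau>\<in>T. (real (vs i 0 \<tau>) + (\<Sum>j\<in>{1..K}. real (vs i j \<tau>))) / t)"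
          using pw by (rule sum_mono)
        also have "\<dots> = (real (N 0) + (\<Sum>j\<in>{1..K}. real (N j))) / t"
          unfolding N_def by (simp add: sum_divide_distrib[symmetric] sum.distrib sum.swap[of _ T])
        also have "\<dots> \<le> (real v + (\<Sum>j\<in>{1..K}. real v)) / t"
          using Nv tpos by (intro divide_right_mono add_mono sum_mono) auto
        also have "\<dots> = real (K + 1) * real v / t" by (simp add: algebra_simps)
        also have "\<dots> \<le> real k * real v / t"
          using Kk' tpos by (intro divide_right_mono mult_right_mono) auto
        finally show ?thesis .
      qed
      have "(\<Sum>\<tau>\<in>T. \<bar>dvec \<sigma> ar r D \<tau> - dvec \<sigma> ar r D0 \<tau>\<bar>) \<le> 2 * (\<Sum>\<tau>\<in>T. \<bar>x \<tau> - y \<tau>\<bar>) / sum x T"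
        unfolding dvD dvD0
        by (rule norm_lemma) (use \<open>finite T\<close> tpos n0 sx in \<open>auto simp: x_def y_def\<close>)
      also have "\<dots> \<le> 2 * (real k * real v / t) / real n"
        unfolding sx using sumdiff n0 by (intro divide_right_mono) auto
      also have "\<dots> = \<epsilon>"
        using tn tpos n0 eps k1 v1 by (simp add: field_simps)
      finally have dist: "(\<Sum>\<tau>\<in>T. \<bar>dvec \<sigma> ar r D \<tau> - dvec \<sigma> ar r D0 \<tau>\<bar>) \<le> \<epsilon>" .
      show ?thesis using classC D0C dist size unfolding B_def by (intro exI[of _ D0]) auto
    qed
  qed
  then show ?thesis unfolding Let_def c_def k_def v_def T_def V_def ctypes_def .
qed

end
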